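(* Let $(\phi_1,\dots,\phi_N)\in\mathcal{U}$ be an arbitrary $N$-tuple of admissible stationary strategies and let $x\in\mathbb{V}$. Assume hypotheses H1, H2, H3 hold and that there exists $L_s>0$ with $|\phi_i(x_1)-\phi_i(x_2)|\le L_s|x_1-x_2|$, $i=1,\dots,N$. Assume that either $\rho>L$, with $L=L_g(1+NL_s)$, and $g$ is bounded, or $\rho>L+K$, where $K\ge0$ is a constant such that $|g(y,u_i,u_{-i})|\le K(1+|y|)$ for all arguments (such $K$ exists by H1). Then there exist a positive constant $C$ and $h_0>0$ such that for all $h\le h_0$ $$\bigl|W_{i,h}(\phi_i,\phi_{-i},x)-W_i(\phi_i,\phi_{-i},x)\bigr|\le C h,\quad i=1,\dots,N.$$
   Context: Setting: an $N$-player infinite-horizon differential game. Player $i$ maximizes over own control $u_i$ $$W_i(u_i,u_{-i},x_0)=\int_0^\infty f_i(x,u_i,u_{-i})e^{-\rho t}\,\mathrm{d}t$$ subject to $\dot x=g(x,u_i,u_{-i})$, $x(0)=x_0$, where $f_i:\mathbb{V}\times\mathbb{U}_1\times\dots\times\mathbb{U}_N\to\mathbb{R}$, $g:\mathbb{V}\times\mathbb{U}_1\times\dots\times\mathbb{U}_N\to\mathbb{R}^n$ are continuous, $\mathbb{V}\subset\mathbb{R}^n$, $\mathbb{U}_i\subset\mathbb{R}^m$, $\rho>0$, and $u_{-i}=[u_1,\dots,u_{i-1},u_{i+1},\dots,u_N]$. $\mathcal{U}=\mathcal{U}_1\times\dots\times\mathcal{U}_N$ is the set of admissible stationary Markovian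 strategies: each $\mathcal{U}_i$ is a set of measurable functions $\phi_i:\mathbb{V}\to\mathbb{U}_i$ such that for every $(\phi_1,\dots,\phi_N)\in\mathcal{U}$ and every $x_0\in\mathbb{V}$ the state equation with $u_i=\phi_i(x(t))$ has a unique absolutely continuous solution $x(t)\in\mathbb{V}$ for all $t\ge0$. $W_i(\phi_i,\phi_{-i},x)$ denotes the payoff when the strategies are used from initial state $x$. Discrete-time game: for $h>0$, $t_n=nh$, $\beta_h=1-\rho h$, player $i$ maximizes $$W_{i,h}(\boldsymbol{u}_i,\boldsymbol{u}_{-i},x_0)=h\sum_{n=0}^\infty \beta_h^n f_i(x_n,u_{i,n},u_{-i,n})$$ subject to $x_{n+1}=x_n+hg(x_n,u_{i,n},u_{-i,n})$. It is assumed that for every $x_0\in\mathbb{V}$ and every $(\psi_1,\dots,\psi_N)\in\mathcal{U}$ this recursion with $u_{j,n}=\psi_j(x_n)$ is well defined with $x_n\in\mathbb{V}$ for all $n$; $W_{i,h}(\psi_i,\psi_{-i},x_0)$ denotes the corresponding discrete payoff. Hypotheses: H1: there is $L_g$ with $|g(x,u_1,\dots,u_N)-g(y,v_1,\dots,v_N)|\le L_g(|x-y|+\sum_{j=1}^N|u_j-v_j|)$ for all arguments. H2: there are $L_i$ with $|f_i(x,u_1,\dots,u_N)-f_i(y,v_1,\dots,v_N)|\le L_i(|x-y|+\sum_{j=1}^N|u_j-v_j|)$. H3: there is $M$ with $|f_i(x,u_1,\dots,u_N)|\le M$ for all arguments. *)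

theory Defs
  imports "HOL-Analysis.Analysis"
begin

text \<open>Players are indexed by 0..<N. A control profile is a function nat => 'u,
  only the components j < N matter.\<close>

definition profile :: "(nat \<Rightarrow> 'v \<Rightarrow> 'u) \<Rightarrow> 'v \<Rightarrow> nat \<Rightarrow> 'u" where
  "profile phi y = (\<lambda>j. phi j y)"

text \<open>Absolutely continuous solution on [0,oo) of x' = g(x, phi(x)), x(0) = x0, staying in V,
  expressed as the integral equation with a (locally) Lebesgue integrable integrand.\<close>
definition is_solution ::
  "'v::euclidean_space set \<Rightarrow> ('v \<Rightarrow> (nat \<Rightarrow> 'u) \<Rightarrow> 'v) \<Rightarrow> (nat \<Rightarrow> 'v \<Rightarrow> 'u)
    \<Rightarrow> 'v \<Rightarrow> (real \<Rightarrow> 'v) \<Rightarrow> bool" where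
  "is_solution V g phi x0 x \<longleftrightarrow>
     (\<forall>t\<ge>0. x t \<in> V
        \<and> (\<lambda>s. g (x s) (profile phi (x s))) absolutely_integrable_on {0..t}
        \<and> x t = x0 + integral {0..t} (\<lambda>s. g (x s) (profile phi (x s))))"

definition has_unique_solution ::
  "'v::euclidean_space set \<Rightarrow> ('v \<Rightarrow> (nat \<Rightarrow> 'u) \<Rightarrow> 'v) \<Rightarrow> (nat \<Rightarrow> 'v \<Rightarrow> 'u)
    \<Rightarrow> 'v \<Rightarrow> bool" where
  "has_unique_solution V g phi x0 \<longleftrightarrow>
     (\<exists>x. is_solution V g phi x0 x \<and>
        (\<forall>y. is_solution V g phi x0 y \<longrightarrow> (\<forall>t\<ge>0. y t = x t)))"

definition traj ::
  "'v::euclidean_space set \<Rightarrow> ('v \<Rightarrow> (nat \<Rightarrow> 'u) \<Rightarrow> 'v) \<Rightarrow> (nat \<Rightarrow> 'v \<Rightarrow> 'u)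
    \<Rightarrow> 'v \<Rightarrow> real \<Rightarrow> 'v" where
  "traj V g phi x0 = (SOME x. is_solution V g phi x0 x)"

definition W ::
  "'v::euclidean_space set \<Rightarrow> ('v \<Rightarrow> (nat \<Rightarrow> 'u) \<Rightarrow> 'v) \<Rightarrow> (nat \<Rightarrow> 'v \<Rightarrow> (nat \<Rightarrow> 'u) \<Rightarrow> real)
    \<Rightarrow> real \<Rightarrow> (nat \<Rightarrow> 'v \<Rightarrow> 'u) \<Rightarrow> nat \<Rightarrow> 'v \<Rightarrow> real" where
  "W V g f \<rho> phi i x0 =
     integral {0..} (\<lambda>t. f i (traj V g phi x0 t) (profile phi (traj V g phi x0 t)) * exp (- \<rho> * t))"

fun disc_traj :: "('v::real_vector \<Rightarrow> (nat \<Rightarrow> 'u) \<Rightarrow> 'v) \<Rightarrow> (nat \<Rightarrow> 'v \<Rightarrow> 'u)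
    \<Rightarrow> real \<Rightarrow> 'v \<Rightarrow> nat \<Rightarrow> 'v" where
  "disc_traj g phi h x0 0 = x0"
| "disc_traj g phi h x0 (Suc n) =
     disc_traj g phi h x0 n + h *\<^sub>R g (disc_traj g phi h x0 n) (profile phi (disc_traj g phi h x0 n))"

definition W_disc ::
  "('v::real_vector \<Rightarrow> (nat \<Rightarrow> 'u) \<Rightarrow> 'v) \<Rightarrow> (nat \<Rightarrow> 'v \<Rightarrow> (nat \<Rightarrow> 'u) \<Rightarrow> real)
    \<Rightarrow> real \<Rightarrow> real \<Rightarrow> (nat \<Rightarrow> 'v \<Rightarrow> 'u) \<Rightarrow> nat \<Rightarrow> 'v \<Rightarrow> real" where
  "W_disc g f \<rho> h phi i x0 =
     h * (\<Sum>n. (1 - \<rho> * h) ^ n * f i (disc_traj g phi h x0 n) (profile phi (disc_traj g phi h x0 n)))"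

end

theory Submission
  imports Defs "HOL-Analysis.Analysis"
begin

lemma step_lemma:
  fixes X :: "real \<Rightarrow> 'v::real_normed_vector" and G :: "'v \<Rightarrow> 'v"
  assumes Lnn: "0 \<le> L" and hL: "h * L \<le> 1/2" and h: "0 < h"
  and lip: "\<And>a b. a \<in> V \<Longrightarrow> b \<in> V \<Longrightarrow> norm (G a - G b) \<le> L * norm (a - b)"
  and XV: "\<And>s. s \<in> {t0..t0+h} \<Longrightarrow> X s \<in> V"
  and der: "\<And>s. s \<in> {t0..t0+h} \<Longrightarrow> (X has_vector_derivative G (X s)) (at s within {t0..t0+h})"
  and y: "y \<in> V"
  shows "\<forall>s\<in>{t0..t0+h}. norm (X s - X t0) \<le> 2*h*(norm (G y) + L * norm (X t0 - y))"
   and "norm (X (t0+h) - (y + h *\<^sub>R G y)) \<le> (1 + h*L + 2*h^2*L^2) * norm (X t0 - y) + 2*h^2*L*norm (G y)"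
proof -
  let ?S = "{t0..t0+h}"
  have t0S: "t0 \<in> ?S" and t1S: "t0+h \<in> ?S" using h by auto
  have cont: "continuous_on ?S X"
    using der has_vector_derivative_continuous continuous_on_eq_continuous_within by blast
  have "continuous_on ?S (\<lambda>s. norm (X s - X t0))"
    by (intro continuous_intros cont)
  then obtain r where rS: "r \<in> ?S" and rmax: "\<And>s. s \<in> ?S \<Longrightarrow> norm (X s - X t0) \<le> norm (X r - X t0)"
    using continuous_attains_sup[of ?S "\<lambda>s. norm (X s - X t0)"] t0S by fastforce
  define m where "m = norm (X r - X t0)"
  have m0: "0 \<le> m" by (simp add: m_def)
  have lin: "norm (X s - X t0 - (s - t0) *\<^sub>R G (X t0)) \<le> norm (s - t0) * (L * m)" if s: "s \<in> ?S" for s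
  proof (rule vector_differentiable_bound_linearization[where S="?S" and f'="\<lambda>s. G (X s)"])
    show "\<And>x. x \<in> ?S \<Longrightarrow> (X has_vector_derivative G (X x)) (at x within ?S)" by (rule der)
    show "closed_segment t0 s \<subseteq> ?S" using s t0S by (auto simp: closed_segment_eq_real_ivl)
    show "t0 \<in> ?S" by (rule t0S)
    fix x assume x: "x \<in> ?S"
    have "norm (G (X x) - G (X t0)) \<le> L * norm (X x - X t0)" using lip XV x t0S by blast
    also have "\<dots> \<le> L * m" using rmax[OF x] Lnn unfolding m_def by (simp add: mult_left_mono)
    finally show "norm (G (X x) - G (X t0)) \<le> L * m" .
  qed
  have bnd: "norm (X s - X t0) \<le> h * (norm (G (X t0)) + L * m)" if s: "s \<in> ?S" for s
  proof -
    have st: "0 \<le> s - t0" "s - t0 \<le> h" using s by auto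
    have "norm (X s - X t0) \<le> norm (X s - X t0 - (s - t0) *\<^sub>R G (X t0)) + norm ((s - t0) *\<^sub>R G (X t0))"
      by (metis norm_triangle_ineq diff_add_cancel)
    also have "\<dots> \<le> (s - t0) * (L * m) + (s - t0) * norm (G (X t0))"
      using lin[OF s] st by simp
    also have "\<dots> \<le> h * (L * m) + h * norm (G (X t0))"
      using st Lnn m0 by (intro add_mono mult_right_mono) auto
    finally show ?thesis by (simp add: algebra_simps)
  qed
  have "m \<le> h * (norm (G (X t0)) + L * m)" using bnd[OF rS] unfolding m_def .
  hence "m * (1 - h*L) \<le> h * norm (G (X t0))" by (simp add: algebra_simps)
  moreover have "m * (1/2) \<le> m * (1 - h*L)" using hL m0 by (intro mult_left_mono) auto
  ultimately have m2: "m \<le> 2 * h * norm (G (X t0))" by linarith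
  have GX: "norm (G (X t0)) \<le> norm (G y) + L * norm (X t0 - y)"
    using lip[OF XV[OF t0S] y] norm_triangle_sub[of "G (X t0)" "G y"] by linarith
  have m3: "m \<le> 2*h*(norm (G y) + L * norm (X t0 - y))"
  proof -
    have "2*h*norm (G (X t0)) \<le> 2*h*(norm (G y) + L * norm (X t0 - y))"
      by (rule mult_left_mono[OF GX]) (use h in simp)
    thus ?thesis using m2 by linarith
  qed
  show "\<forall>s\<in>{t0..t0+h}. norm (X s - X t0) \<le> 2*h*(norm (G y) + L * norm (X t0 - y))"
    using rmax m3 unfolding m_def by (meson order_trans)
  have "X (t0+h) - (y + h *\<^sub>R G y) = (X t0 - y) + (X (t0+h) - X t0 - (t0 + h - t0) *\<^sub>R G (X t0)) + h *\<^sub>R (G (X t0) - G y)"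
    by (simp add: algebra_simps)
  hence "norm (X (t0+h) - (y + h *\<^sub>R G y)) \<le> norm (X t0 - y) + norm (X (t0+h) - X t0 - (t0 + h - t0) *\<^sub>R G (X t0)) + norm (h *\<^sub>R (G (X t0) - G y))"
    by (metis norm_triangle_ineq order_trans add_right_mono)
  also have "\<dots> \<le> norm (X t0 - y) + h * (L * m) + h * (L * norm (X t0 - y))"
    using lin[OF t1S] lip[OF XV[OF t0S] y] h by (intro add_mono) auto
  also have "\<dots> \<le> norm (X t0 - y) + h * (L * (2*h*(norm (G y) + L * norm (X t0 - y)))) + h * (L * norm (X t0 - y))"
    using m3 h Lnn by (intro add_mono mult_left_mono) auto
  also have "\<dots> = (1 + h*L + 2*h^2*L^2) * norm (X t0 - y) + 2*h^2*L*norm (G y)"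
    by (simp add: algebra_simps power2_eq_square)
  finally show "norm (X (t0+h) - (y + h *\<^sub>R G y)) \<le> (1 + h*L + 2*h^2*L^2) * norm (X t0 - y) + 2*h^2*L*norm (G y)" .
qed


lemma exp_bound_E:
  fixes h L \<delta> :: real
  assumes "0 \<le> h" "0 \<le> L" "2*h*L^2 \<le> \<delta>"
  shows "1 + h*L + 2*h^2*L^2 \<le> exp ((L+\<delta>)*h)"
proof -
  have "1 + h*L + 2*h^2*L^2 \<le> 1 + (L+\<delta>)*h"
    using assms mult_left_mono[OF assms(3) assms(1)] by (simp add: algebra_simps power2_eq_square)
  also have "\<dots> \<le> exp ((L+\<delta>)*h)" by (rule exp_ge_add_one_self)
  finally show ?thesis .
qed

lemma disc_growth:
  fixes xd :: "nat \<Rightarrow> 'v::real_normed_vector"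
  assumes K: "0 \<le> K" and h: "0 < h"
    and gr: "\<And>y. y \<in> V \<Longrightarrow> norm (G y) \<le> A + K * norm y"
    and rec: "\<And>k. xd (Suc k) = xd k + h *\<^sub>R G (xd k)"
    and xdV: "\<And>k. xd k \<in> V"
  shows "A + K * norm (xd k) \<le> (A + K * norm (xd 0)) * exp (K*h*real k)"
proof (induction k)
  case 0 then show ?case by simp
next
  case (Suc k)
  have "norm (xd (Suc k)) \<le> norm (xd k) + h * norm (G (xd k))"
    using rec[of k] h norm_triangle_ineq[of "xd k" "h *\<^sub>R G (xd k)"] by simp
  also have "\<dots> \<le> norm (xd k) + h * (A + K * norm (xd k))"
    using gr[OF xdV[of k]] h by (simp add: mult_left_mono)
  finally have "A + K * norm (xd (Suc k)) \<le> A + K * (norm (xd k) + h * (A + K * norm (xd k)))"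
    using K by (simp add: mult_left_mono)
  also have "\<dots> = (1 + K*h) * (A + K * norm (xd k))" by (simp add: algebra_simps)
  also have "\<dots> \<le> exp (K*h) * ((A + K * norm (xd 0)) * exp (K*h*real k))"
  proof (rule mult_mono)
    show "1 + K*h \<le> exp (K*h)" by (rule exp_ge_add_one_self)
    show "A + K * norm (xd k) \<le> (A + K * norm (xd 0)) * exp (K*h*real k)" by (rule Suc.IH)
    show "0 \<le> exp (K*h)" by simp
    have "0 \<le> norm (G (xd k))" by simp
    then show "0 \<le> A + K * norm (xd k)" using gr[OF xdV[of k]] by linarith
  qed
  also have "\<dots> = (A + K * norm (xd 0)) * exp (K*h*real (Suc k))"
    by (simp add: algebra_simps exp_add[symmetric])
  finally show ?case .
qed

lemma err_bound:
  fixes X :: "real \<Rightarrow> 'v::real_normed_vector" and G :: "'v \<Rightarrow> 'v" and xd :: "nat \<Rightarrow> 'v"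
  assumes Lnn: "0 \<le> L" and K: "0 \<le> K" and dl: "0 < \<delta>" and h: "0 < h"
    and hL: "h * L \<le> 1/2" and hL2: "2*h*L^2 \<le> \<delta>"
    and lip: "\<And>a b. a \<in> V \<Longrightarrow> b \<in> V \<Longrightarrow> norm (G a - G b) \<le> L * norm (a - b)"
    and gr: "\<And>y. y \<in> V \<Longrightarrow> norm (G y) \<le> A + K * norm y"
    and XV: "\<And>s. 0 \<le> s \<Longrightarrow> X s \<in> V"
    and der: "\<And>T s. 0 \<le> T \<Longrightarrow> s \<in> {0..T} \<Longrightarrow> (X has_vector_derivative G (X s)) (at s within {0..T})"
    and X0: "X 0 = xd 0"
    and rec: "\<And>k. xd (Suc k) = xd k + h *\<^sub>R G (xd k)"
    and xdV: "\<And>k. xd k \<in> V"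
  shows "norm (X (real k * h) - xd k) \<le> (2*L*(A + K * norm (xd 0))/\<delta>) * h * exp ((L+K+2*\<delta>)*h*real k)"
proof (induction k)
  case 0
  have "0 \<le> norm (G (xd 0))" by simp
  hence "0 \<le> A + K * norm (xd 0)" using gr[OF xdV[of 0]] by linarith
  hence "0 \<le> (2*L*(A + K * norm (xd 0))/\<delta>) * h" using Lnn dl h by simp
  then show ?case using X0 by simp
next
  case (Suc k)
  define w0 where "w0 = A + K * norm (xd 0)"
  define D where "D = 2*L*w0/\<delta>"
  have w0: "0 \<le> w0" using gr[OF xdV[of 0]] norm_ge_zero[of "G (xd 0)"] unfolding w0_def by linarith
  have D0: "0 \<le> D" unfolding D_def using w0 Lnn dl by simp
  define t0 where "t0 = real k * h"
  have t0: "0 \<le> t0" using h by (simp add: t0_def)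
  have t1: "real (Suc k) * h = t0 + h" by (simp add: t0_def algebra_simps)
  have derS: "(X has_vector_derivative G (X s)) (at s within {t0..t0+h})" if "s \<in> {t0..t0+h}" for s
    using der[of "t0+h" s] that t0 h
    by (auto intro: has_vector_derivative_within_subset[where T="{t0..t0+h}"])
  have st: "norm (X (t0+h) - (xd k + h *\<^sub>R G (xd k))) \<le> (1 + h*L + 2*h^2*L^2) * norm (X t0 - xd k) + 2*h^2*L*norm (G (xd k))"
  proof (rule step_lemma(2)[where V=V and X=X and G=G])
    show "\<And>s. s \<in> {t0..t0 + h} \<Longrightarrow> X s \<in> V" using XV t0 by auto
  qed (use Lnn hL h lip derS xdV in auto)
  have a: "norm (G (xd k)) \<le> w0 * exp (K*h*real k)"
    using gr[OF xdV[of k]] disc_growth[of K h V G A xd k, OF K h gr rec xdV] unfolding w0_def by linarith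
  define P where "P = exp ((L+K+2*\<delta>)*h*real k)"
  have P0: "0 < P" by (simp add: P_def)
  have "K*h*real k \<le> (L+K+2*\<delta>)*h*real k" using h Lnn dl
    by (intro mult_right_mono) auto
  hence eK: "exp (K*h*real k) \<le> P" unfolding P_def by simp
  have E: "1 + h*L + 2*h^2*L^2 \<le> exp ((L+\<delta>)*h)" using exp_bound_E[of h L \<delta>] h Lnn hL2 by simp
  have R: "exp ((L+K+2*\<delta>)*h) = exp ((L+\<delta>)*h) * exp ((K+\<delta>)*h)"
    by (simp add: exp_add[symmetric] algebra_simps)
  have R2: "exp ((L+\<delta>)*h) * exp ((K+\<delta>)*h) - exp ((L+\<delta>)*h) \<ge> \<delta> * h"
  proof -
    have e1: "1 + (K+\<delta>)*h \<le> exp ((K+\<delta>)*h)" by (rule exp_ge_add_one_self)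
    have "0 \<le> K*h" using K h by simp
    moreover have "(K+\<delta>)*h = K*h + \<delta>*h" by (simp add: algebra_simps)
    ultimately have "exp ((K+\<delta>)*h) - 1 \<ge> \<delta>*h" using e1 by linarith
    moreover have "1 \<le> exp ((L+\<delta>)*h)" using Lnn dl h by simp
    ultimately have "exp ((L+\<delta>)*h) * (exp ((K+\<delta>)*h) - 1) \<ge> 1 * (\<delta>*h)"
      using dl h by (intro mult_mono) auto
    thus ?thesis by (simp add: algebra_simps)
  qed
  have "norm (X (real (Suc k) * h) - xd (Suc k)) \<le> (1 + h*L + 2*h^2*L^2) * norm (X t0 - xd k) + 2*h^2*L*norm (G (xd k))"
    using st by (simp only: t1 rec)
  also have "\<dots> \<le> exp ((L+\<delta>)*h) * (D * h * P) + 2*h^2*L*(w0 * P)"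
  proof (rule add_mono)
    have IH: "norm (X t0 - xd k) \<le> D * h * P" using Suc.IH unfolding t0_def D_def w0_def P_def .
    show "(1 + h*L + 2*h^2*L^2) * norm (X t0 - xd k) \<le> exp ((L+\<delta>)*h) * (D * h * P)"
      by (rule mult_mono[OF E IH]) auto
    have aP: "norm (G (xd k)) \<le> w0 * P" using a eK w0 by (meson mult_left_mono order_trans)
    show "2*h^2*L*norm (G (xd k)) \<le> 2*h^2*L*(w0 * P)"
      by (rule mult_left_mono[OF aP]) (use h Lnn in simp)
  qed
  also have "\<dots> \<le> D * h * P * exp ((L+K+2*\<delta>)*h)"
  proof -
    have eq: "D * h * P * (\<delta> * h) = 2*h^2*L*(w0 * P)"
      unfolding D_def using dl by (simp add: field_simps power2_eq_square)
    have "D * h * P * (\<delta> * h) \<le> D * h * P * (exp ((L+K+2*\<delta>)*h) - exp ((L+\<delta>)*h))"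
      using R R2 D0 h P0 by (intro mult_left_mono) auto
    hence le2: "D * h * P * (\<delta> * h) \<le> D * h * P * exp ((L+K+2*\<delta>)*h) - D * h * P * exp ((L+\<delta>)*h)"
      by (simp add: right_diff_distrib)
    have c: "exp ((L+\<delta>)*h) * (D * h * P) = D * h * P * exp ((L+\<delta>)*h)" by (simp add: mult.commute)
    show ?thesis using eq le2 c by linarith
  qed
  also have "\<dots> = (2*L*(A + K * norm (xd 0))/\<delta>) * h * exp ((L+K+2*\<delta>)*h*real (Suc k))"
    unfolding D_def w0_def P_def by (simp add: exp_add[symmetric] algebra_simps)
  finally show ?case .
qed



lemma z_le_exp_half: "0 \<le> (z::real) \<Longrightarrow> z \<le> exp (z/2)"
proof -
  assume z: "0 \<le> z"
  have "1 + z/4 \<le> exp (z/4)" by (rule exp_ge_add_one_self)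
  hence "(1 + z/4)^2 \<le> exp (z/4)^2" using z by (intro power_mono) auto
  also have "exp (z/4)^2 = exp (z/2)" by (simp add: power2_eq_square exp_add[symmetric])
  finally have "(1 + z/4)^2 \<le> exp (z/2)" .
  moreover have "(1 + z/4)^2 - z = (1 - z/4)^2" by (simp add: power2_eq_square algebra_simps)
  moreover have "0 \<le> (1 - z/4)^2" by simp
  ultimately show ?thesis by linarith
qed

lemma zexp_bound: "0 \<le> (z::real) \<Longrightarrow> z * exp (-z) \<le> exp (-z/2)"
proof -
  assume z: "0 \<le> z"
  have "z * exp (-z) \<le> exp (z/2) * exp (-z)" using z_le_exp_half[OF z] by (intro mult_right_mono) auto
  also have "\<dots> = exp (-z/2)" by (simp add: exp_add[symmetric])
  finally show ?thesis .
qed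

lemma beta_exp_bound:
  fixes y :: real
  assumes y0: "0 \<le> y" and y1: "y \<le> 1/2"
  shows "\<bar>(1 - y)^k - exp (- y * real k)\<bar> \<le> 2 * y * exp (- y * real k / 2)"
proof -
  have b0: "0 \<le> 1 - y" using y1 by simp
  have "(1 - y)^k \<le> exp (-y)^k" using b0 exp_ge_add_one_self[of "-y"] by (intro power_mono) auto
  also have "exp (-y)^k = exp (- y * real k)" by (simp add: exp_of_nat_mult[symmetric] algebra_simps)
  finally have up: "(1 - y)^k \<le> exp (- y * real k)" .
  have "- y - 2 * y^2 \<le> ln (1 - y)" by (rule ln_one_minus_pos_lower_bound[OF y0 y1])
  hence "exp (- y - 2 * y^2) \<le> exp (ln (1 - y))" by simp
  also have "exp (ln (1 - y)) = 1 - y" using y1 by simp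
  finally have "exp (- y - 2 * y^2) \<le> 1 - y" .
  hence "exp (- y - 2 * y^2)^k \<le> (1 - y)^k" by (intro power_mono) auto
  moreover have "exp (- y - 2 * y^2)^k = exp (- y * real k) * exp (- 2 * y^2 * real k)"
    by (simp add: exp_of_nat_mult[symmetric] exp_add[symmetric] algebra_simps)
  ultimately have lo: "exp (- y * real k) * exp (- 2 * y^2 * real k) \<le> (1 - y)^k" by simp
  have "1 - 2 * y^2 * real k \<le> exp (- 2 * y^2 * real k)" using exp_ge_add_one_self[of "- 2 * y^2 * real k"] by simp
  hence "exp (- y * real k) * (1 - 2 * y^2 * real k) \<le> exp (- y * real k) * exp (- 2 * y^2 * real k)"
    by (intro mult_left_mono) auto
  with lo have "exp (- y * real k) - (1 - y)^k \<le> 2 * y * ((y * real k) * exp (- (y * real k)))"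
    by (simp add: algebra_simps power2_eq_square)
  also have "\<dots> \<le> 2 * y * exp (- (y * real k) / 2)"
    using zexp_bound[of "y * real k"] y0 by (intro mult_left_mono) auto
  finally show ?thesis using up by (simp add: abs_if)
qed

lemma exp_interval_bound:
  fixes \<rho> t s h :: real
  assumes "0 < \<rho>" "s \<le> t" "t \<le> s + h"
  shows "\<bar>exp (- \<rho> * s) - exp (- \<rho> * t)\<bar> \<le> \<rho> * h * exp (- \<rho> * s)"
proof -
  define u where "u = \<rho> * (t - s)"
  define a where "a = exp (- \<rho> * s)"
  have a0: "0 < a" by (simp add: a_def)
  have u0: "0 \<le> u" using assms by (simp add: u_def)
  have uh: "u \<le> \<rho> * h" unfolding u_def using assms by (intro mult_left_mono) auto
  have e: "exp (- \<rho> * t) = a * exp (- u)" unfolding a_def u_def by (simp add: exp_add[symmetric] algebra_simps)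
  have l1: "1 - u \<le> exp (- u)" using exp_ge_add_one_self[of "- u"] by simp
  have l2: "exp (- u) \<le> 1" using u0 by simp
  have "a - a * exp (- u) = a * (1 - exp (- u))" by (simp add: algebra_simps)
  moreover have "0 \<le> a * (1 - exp (- u))" using a0 l2 by simp
  moreover have "a * (1 - exp (- u)) \<le> a * (\<rho> * h)" using a0 l1 uh by (intro mult_left_mono) auto
  ultimately have "\<bar>a - a * exp (- u)\<bar> \<le> \<rho> * h * a" by (simp add: algebra_simps)
  thus ?thesis unfolding e a_def .
qed



lemma pw_bound:
  fixes Fy Fz e d a n :: real
  assumes rho: "0 < \<rho>" and h: "0 < h" "h \<le> 1" "\<rho> * h \<le> 1/2"
    and LF: "0 \<le> LF" and Lnn: "0 \<le> L" and K: "0 \<le> K" and D: "0 \<le> D" and w0: "0 \<le> w0"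
    and dl: "0 < \<delta>" and rhoeq: "\<rho> = L + K + 4*\<delta>"
    and mu: "\<mu> \<le> \<rho>/2" "\<mu> \<le> 2*\<delta>"
    and Fy: "\<bar>Fy\<bar> \<le> M" and FL: "\<bar>Fy - Fz\<bar> \<le> LF * n" and n: "n \<le> e + d"
    and e: "e \<le> D * h * exp ((L+K+2*\<delta>)*h*real k)"
    and a: "a \<le> w0 * exp ((L+K+2*\<delta>)*h*real k)"
    and d: "d \<le> 2*h*(a + L*e)" and e0: "0 \<le> e"
    and t: "real k * h \<le> t" "t \<le> real k * h + h"
  shows "\<bar>(1 - \<rho>*h)^k * Fy - Fz * exp (- \<rho> * t)\<bar> \<le> h * (3*\<rho>*M + LF*(D + 2*w0 + 2*L*D)) * exp (- \<mu> * h * real k)"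
proof -
  define P where "P = exp ((L+K+2*\<delta>)*h*real k)"
  define r where "r = exp (- \<mu> * h * real k)"
  have M0: "0 \<le> M" using Fy by linarith
  have P0: "0 < P" by (simp add: P_def)
  have hk0: "0 \<le> h * real k" using h by simp
  have b1: "\<bar>(1 - \<rho>*h)^k - exp (- (\<rho>*h) * real k)\<bar> \<le> 2 * (\<rho>*h) * exp (- (\<rho>*h) * real k / 2)"
    by (rule beta_exp_bound) (use rho h in auto)
  have b2: "\<bar>exp (- \<rho> * (real k * h)) - exp (- \<rho> * t)\<bar> \<le> \<rho> * h * exp (- \<rho> * (real k * h))"
    by (rule exp_interval_bound) (use rho t in auto)
  have r1: "exp (- (\<rho>*h) * real k / 2) \<le> r" unfolding r_def
    using mult_right_mono[OF mu(1) hk0] by (simp add: algebra_simps)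
  have r2: "exp (- \<rho> * (real k * h)) \<le> r"
  proof -
    have "\<mu> \<le> \<rho>" using mu(1) rho by linarith
    from mult_right_mono[OF this hk0] show ?thesis by (simp add: algebra_simps r_def)
  qed
  have eqk: "exp (- (\<rho>*h) * real k) = exp (- \<rho> * (real k * h))" by (simp add: algebra_simps)
  have disc: "\<bar>(1 - \<rho>*h)^k - exp (- \<rho> * t)\<bar> \<le> 3 * \<rho> * h * r"
  proof -
    have "\<bar>(1 - \<rho>*h)^k - exp (- \<rho> * t)\<bar> \<le> \<bar>(1 - \<rho>*h)^k - exp (- (\<rho>*h) * real k)\<bar> + \<bar>exp (- \<rho> * (real k * h)) - exp (- \<rho> * t)\<bar>"
      unfolding eqk by linarith
    also have "\<dots> \<le> 2 * (\<rho>*h) * r + \<rho> * h * r"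
    proof (rule add_mono)
      show "\<bar>(1 - \<rho>*h)^k - exp (- (\<rho>*h) * real k)\<bar> \<le> 2 * (\<rho>*h) * r"
        using order_trans[OF b1 mult_left_mono[OF r1]] rho h by simp
      show "\<bar>exp (- \<rho> * (real k * h)) - exp (- \<rho> * t)\<bar> \<le> \<rho> * h * r"
        using order_trans[OF b2 mult_left_mono[OF r2]] rho h by simp
    qed
    finally show ?thesis by simp
  qed
  have T1: "\<bar>((1 - \<rho>*h)^k - exp (- \<rho> * t)) * Fy\<bar> \<le> 3 * \<rho> * h * r * M"
    unfolding abs_mult using disc Fy by (intro mult_mono) (auto simp: r_def)
  have eP: "e \<le> D * h * P" using e by (simp add: P_def)
  have aP: "a \<le> w0 * P" using a by (simp add: P_def)
  have "n \<le> e + 2*h*a + 2*h*L*e" using n d by (simp add: algebra_simps)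
  also have "\<dots> \<le> D*h*P + 2*h*(w0*P) + 2*h*L*(D*h*P)"
    using eP aP h Lnn by (intro add_mono mult_left_mono) auto
  also have "\<dots> \<le> D*h*P + 2*h*(w0*P) + 2*h*L*(D*1*P)"
    using h Lnn D P0 by (intro add_mono mult_left_mono mult_right_mono) auto
  also have "\<dots> = h * P * (D + 2*w0 + 2*L*D)" using h by (simp add: algebra_simps)
  finally have nb: "n \<le> h * P * (D + 2*w0 + 2*L*D)" .
  have ex: "exp (- \<rho> * t) * P \<le> r"
  proof -
    have "exp (- \<rho> * t) \<le> exp (- \<rho> * (real k * h))" using t rho by simp
    hence "exp (- \<rho> * t) * P \<le> exp (- \<rho> * (real k * h)) * P" using P0 by simp
    also have "\<dots> = exp (- (2*\<delta>) * h * real k)" unfolding P_def rhoeq by (simp add: exp_add[symmetric] algebra_simps)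
    also have "\<dots> \<le> r" unfolding r_def using mult_right_mono[OF mu(2) hk0] by (simp add: algebra_simps)
    finally show ?thesis .
  qed
  have T2: "\<bar>exp (- \<rho> * t) * (Fy - Fz)\<bar> \<le> h * r * (LF * (D + 2*w0 + 2*L*D))"
  proof -
    have "\<bar>exp (- \<rho> * t) * (Fy - Fz)\<bar> = exp (- \<rho> * t) * \<bar>Fy - Fz\<bar>" by (simp add: abs_mult)
    also have "\<dots> \<le> exp (- \<rho> * t) * (LF * (h * P * (D + 2*w0 + 2*L*D)))"
      using order_trans[OF FL mult_left_mono[OF nb LF]] by (intro mult_left_mono) auto
    also have "\<dots> = (exp (- \<rho> * t) * P) * (h * (LF * (D + 2*w0 + 2*L*D)))" by (simp add: algebra_simps)
    also have "\<dots> \<le> r * (h * (LF * (D + 2*w0 + 2*L*D)))"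
      using ex h LF Lnn D w0 by (intro mult_right_mono) auto
    finally show ?thesis by (simp add: algebra_simps)
  qed
  have "(1 - \<rho>*h)^k * Fy - Fz * exp (- \<rho> * t) = ((1 - \<rho>*h)^k - exp (- \<rho> * t)) * Fy + exp (- \<rho> * t) * (Fy - Fz)"
    by (simp add: algebra_simps)
  hence "\<bar>(1 - \<rho>*h)^k * Fy - Fz * exp (- \<rho> * t)\<bar> \<le> 3 * \<rho> * h * r * M + h * r * (LF * (D + 2*w0 + 2*L*D))"
    using T1 T2 by linarith
  also have "\<dots> = h * (3*\<rho>*M + LF*(D + 2*w0 + 2*L*D)) * r" by (simp add: algebra_simps)
  finally show ?thesis unfolding r_def .
qed



lemma geom_bound:
  fixes \<mu> h :: real
  assumes mu: "0 < \<mu>" and h: "0 < h" "h \<le> 1"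
  shows "h * (\<Sum>k<n. exp (- \<mu> * h * real k)) \<le> exp \<mu> / \<mu>"
proof -
  define q where "q = exp (- \<mu> * h)"
  have q0: "0 < q" and q1: "q < 1" using mu h by (auto simp: q_def)
  have qk: "exp (- \<mu> * h * real k) = q ^ k" for k
    by (simp add: q_def exp_of_nat_mult[symmetric] algebra_simps)
  have "(\<Sum>k<n. exp (- \<mu> * h * real k)) = (1 - q^n) / (1 - q)"
    using q1 by (simp only: qk sum_gp_strict) simp
  also have "\<dots> \<le> 1 / (1 - q)" using q0 q1 by (intro divide_right_mono) auto
  finally have s: "(\<Sum>k<n. exp (- \<mu> * h * real k)) \<le> 1 / (1 - q)" .
  have "1 + \<mu> * h \<le> exp (\<mu> * h)" by (rule exp_ge_add_one_self)
  hence "(1 + \<mu> * h) * q \<le> exp (\<mu> * h) * q" using q0 by simp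
  also have "exp (\<mu> * h) * q = 1" by (simp add: q_def exp_add[symmetric])
  finally have "\<mu> * h * q \<le> 1 - q" by (simp add: algebra_simps)
  hence "h / (1 - q) \<le> h / (\<mu> * h * q)" using q0 q1 mu h by (intro divide_left_mono) auto
  also have "\<dots> = exp (\<mu> * h) / \<mu>" using h q0 by (simp add: q_def exp_minus field_simps)
  also have "\<dots> \<le> exp \<mu> / \<mu>" using mu h by (intro divide_right_mono) (auto simp: mult_left_le)
  finally have "h / (1 - q) \<le> exp \<mu> / \<mu>" .
  moreover have "h * (\<Sum>k<n. exp (- \<mu> * h * real k)) \<le> h * (1 / (1 - q))" using s h by (intro mult_left_mono) auto
  ultimately show ?thesis by simp
qed


lemma core_h:
  fixes X :: "real \<Rightarrow> 'v::real_normed_vector" and G :: "'v \<Rightarrow> 'v" and xd :: "nat \<Rightarrow> 'v"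
    and F :: "'v \<Rightarrow> real"
  assumes Lnn: "0 \<le> L" and K: "0 \<le> K" and rho: "L + K < \<rho>"
    and lip: "\<And>a b. a \<in> V \<Longrightarrow> b \<in> V \<Longrightarrow> norm (G a - G b) \<le> L * norm (a - b)"
    and gr: "\<And>y. y \<in> V \<Longrightarrow> norm (G y) \<le> A + K * norm y"
    and XV: "\<And>s. 0 \<le> s \<Longrightarrow> X s \<in> V"
    and der: "\<And>T s. 0 \<le> T \<Longrightarrow> s \<in> {0..T} \<Longrightarrow> (X has_vector_derivative G (X s)) (at s within {0..T})"
    and X0: "X 0 = x"
    and xd0: "xd 0 = x"
    and rec: "\<And>k. xd (Suc k) = xd k + h *\<^sub>R G (xd k)"
    and xdV: "\<And>k. xd k \<in> V"
    and h: "0 < h" "h \<le> 1" "h * L \<le> 1/2" "2*h*L^2 \<le> \<delta>" "\<rho> * h \<le> 1/2"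
    and dl: "\<delta> = (\<rho> - L - K)/4" and mu: "\<mu> = min (\<rho>/2) (2*\<delta>)"
    and LF: "0 \<le> LF" and Flip: "\<And>a b. a \<in> V \<Longrightarrow> b \<in> V \<Longrightarrow> \<bar>F a - F b\<bar> \<le> LF * norm (a - b)"
    and Fb: "\<And>a. a \<in> V \<Longrightarrow> \<bar>F a\<bar> \<le> M"
  shows "\<bar>h * (\<Sum>k. (1 - \<rho>*h)^k * F (xd k)) - integral {0..} (\<lambda>t. F (X t) * exp (- \<rho> * t))\<bar>
     \<le> h * ((3*\<rho>*M + LF*(2*L*(A + K*norm x)/\<delta> + 2*(A + K*norm x) + 2*L*(2*L*(A + K*norm x)/\<delta>))) * exp \<mu> / \<mu>)"
proof -
  define w0 where "w0 = A + K*norm x"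
  define D where "D = 2*L*w0/\<delta>"
  define c where "c = 3*\<rho>*M + LF*(D + 2*w0 + 2*L*D)"
  define \<phi> where "\<phi> = (\<lambda>t. F (X t) * exp (- \<rho> * t))"
  define \<beta> where "\<beta> = 1 - \<rho>*h"
  have dpos: "0 < \<delta>" using dl rho by simp
  have rpos: "0 < \<rho>" using rho Lnn K by linarith
  have mpos: "0 < \<mu>" using mu dpos rpos by simp
  have rhoeq: "\<rho> = L + K + 4*\<delta>" using dl by simp
  have xV: "x \<in> V" using XV[of 0] X0 by simp
  have w0: "0 \<le> w0" using gr[OF xV] norm_ge_zero[of "G x"] unfolding w0_def by linarith
  have D0: "0 \<le> D" unfolding D_def using w0 Lnn dpos by simp
  have M0: "0 \<le> M" using Fb[OF xV] by linarith
  have c0: "0 \<le> c" unfolding c_def using M0 rpos LF D0 w0 Lnn by simp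
  have b0: "0 \<le> \<beta>" "\<beta> < 1" using h rpos by (auto simp: \<beta>_def)
  have Fcont: "continuous_on V F"
    by (rule lipschitz_on_continuous_on[of LF]) (auto intro!: lipschitz_onI simp: dist_real_def dist_norm Flip LF)
  have Xcont: "continuous_on {0..T} X" if "0 \<le> T" for T
    using der[OF that] has_vector_derivative_continuous continuous_on_eq_continuous_within by blast
  have phicont: "continuous_on {0..T} \<phi>" if "0 \<le> T" for T
    unfolding \<phi>_def
    by (intro continuous_intros continuous_on_compose2[OF Fcont Xcont[OF that]]) (use XV in auto)
  have pw: "\<bar>\<beta>^k * F (xd k) - \<phi> t\<bar> \<le> h * c * exp (- \<mu> * h * real k)"
    if t: "real k * h \<le> t" "t \<le> real k * h + h" for k t
  proof -
    define t0 where "t0 = real k * h"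
    have t00: "0 \<le> t0" using h by (simp add: t0_def)
    have derS: "(X has_vector_derivative G (X s)) (at s within {t0..t0+h})" if "s \<in> {t0..t0+h}" for s
      using der[of "t0+h" s] that t00 h
      by (auto intro: has_vector_derivative_within_subset[where T="{t0..t0+h}"])
    have loc: "\<forall>s\<in>{t0..t0+h}. norm (X s - X t0) \<le> 2*h*(norm (G (xd k)) + L * norm (X t0 - xd k))"
    proof (rule step_lemma(1)[where V=V and X=X and G=G])
      show "\<And>s. s \<in> {t0..t0 + h} \<Longrightarrow> X s \<in> V" using XV t00 by auto
    qed (use Lnn h lip derS xdV in auto)
    have tS: "t \<in> {t0..t0+h}" using t by (simp add: t0_def)
    have e: "norm (X t0 - xd k) \<le> D * h * exp ((L+K+2*\<delta>)*h*real k)"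
      using err_bound[where X=X and G=G and xd=xd and k=k and V=V and A=A, OF Lnn K dpos h(1) h(3) h(4) lip gr XV der _ rec xdV]
      X0 xd0 unfolding t0_def D_def w0_def by simp
    have "A + K * norm (xd k) \<le> (A + K * norm (xd 0)) * exp (K*h*real k)"
      by (rule disc_growth[where G=G and V=V]) (use K h gr rec xdV in auto)
    hence a1: "norm (G (xd k)) \<le> w0 * exp (K*h*real k)"
      using gr[OF xdV[of k]] unfolding w0_def xd0 by linarith
    have "K*h*real k \<le> (L+K+2*\<delta>)*h*real k" using h Lnn dpos
      by (intro mult_right_mono) auto
    hence "exp (K*h*real k) \<le> exp ((L+K+2*\<delta>)*h*real k)" by simp
    hence a: "norm (G (xd k)) \<le> w0 * exp ((L+K+2*\<delta>)*h*real k)"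
      using a1 w0 by (meson mult_left_mono order_trans)
    have Xt: "X t \<in> V" using XV tS t00 by auto
    have n: "norm (xd k - X t) \<le> norm (X t0 - xd k) + norm (X t - X t0)"
      using norm_triangle_ineq[of "xd k - X t0" "X t0 - X t"]
      by (simp add: norm_minus_commute)
    have "\<bar>\<beta>^k * F (xd k) - F (X t) * exp (- \<rho> * t)\<bar> \<le> h * c * exp (- \<mu> * h * real k)"
      unfolding \<beta>_def c_def
    proof (rule pw_bound[where n="norm (xd k - X t)" and e="norm (X t0 - xd k)" and d="norm (X t - X t0)"
          and a="norm (G (xd k))" and K=K and \<delta>=\<delta>])
      show "norm (X t - X t0) \<le> 2 * h * (norm (G (xd k)) + L * norm (X t0 - xd k))" using loc tS by blast
    qed (use rpos h LF Lnn K D0 w0 dpos rhoeq mu Fb[OF xdV[of k]] Flip[OF xdV[of k] Xt] n e a t in \<open>auto simp: t0_def\<close>)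
    thus ?thesis unfolding \<phi>_def .
  qed
  have intv: "\<bar>h * (\<beta>^k * F (xd k)) - integral {real k * h..real k * h + h} \<phi>\<bar> \<le> h * (h * c * exp (- \<mu> * h * real k))" for k
  proof -
    define a where "a = real k * h"
    have a0: "0 \<le> a" using h by (simp add: a_def)
    have sub: "{a..a+h} \<subseteq> {0..a+h}" using a0 by auto
    have pc: "continuous_on {a..a+h} \<phi>"
      using continuous_on_subset[OF phicont sub] a0 h by simp
    have int\<phi>: "\<phi> integrable_on {a..a+h}" using pc by (rule integrable_continuous_interval)
    have "integral {a..a+h} (\<lambda>t. \<beta>^k * F (xd k) - \<phi> t) = integral {a..a+h} (\<lambda>t. \<beta>^k * F (xd k)) - integral {a..a+h} \<phi>"
      by (rule integral_diff) (auto intro: int\<phi>)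
    also have "integral {a..a+h} (\<lambda>t. \<beta>^k * F (xd k)) = h * (\<beta>^k * F (xd k))" using h by simp
    finally have eq: "integral {a..a+h} (\<lambda>t. \<beta>^k * F (xd k) - \<phi> t) = h * (\<beta>^k * F (xd k)) - integral {a..a+h} \<phi>" .
    have "norm (integral {a..a+h} (\<lambda>t. \<beta>^k * F (xd k) - \<phi> t)) \<le> (h * c * exp (- \<mu> * h * real k)) * (a + h - a)"
    proof (rule integral_bound)
      show "a \<le> a + h" using h by simp
      show "continuous_on {a..a+h} (\<lambda>t. \<beta>^k * F (xd k) - \<phi> t)" by (intro continuous_intros pc)
      show "\<And>t. t \<in> {a..a+h} \<Longrightarrow> norm (\<beta>^k * F (xd k) - \<phi> t) \<le> h * c * exp (- \<mu> * h * real k)"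
        using pw unfolding a_def by auto
    qed
    hence "\<bar>h * (\<beta>^k * F (xd k)) - integral {a..a+h} \<phi>\<bar> \<le> (h * c * exp (- \<mu> * h * real k)) * (a + h - a)"
      by (simp only: eq real_norm_def)
    thus ?thesis unfolding a_def by (simp add: algebra_simps)
  qed
  have part: "\<bar>h * (\<Sum>k<n. \<beta>^k * F (xd k)) - integral {0..real n * h} \<phi>\<bar> \<le> h * (h * c * (\<Sum>k<n. exp (- \<mu> * h * real k)))" for n
  proof (induction n)
    case 0 then show ?case by simp
  next
    case (Suc n)
    have n0: "0 \<le> real n * h" using h by simp
    have e1: "real (Suc n) * h = real n * h + h" by (simp add: algebra_simps)
    have "integral {0..real n * h} \<phi> + integral {real n * h..real n * h + h} \<phi> = integral {0..real n * h + h} \<phi>"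
      by (rule Henstock_Kurzweil_Integration.integral_combine) (use n0 h in \<open>auto intro!: integrable_continuous_interval phicont\<close>)
    hence I: "integral {0..real (Suc n) * h} \<phi> = integral {0..real n * h} \<phi> + integral {real n * h..real n * h + h} \<phi>"
      unfolding e1 by simp
    have "h * (\<Sum>k<Suc n. \<beta>^k * F (xd k)) - integral {0..real (Suc n) * h} \<phi>
       = (h * (\<Sum>k<n. \<beta>^k * F (xd k)) - integral {0..real n * h} \<phi>)
         + (h * (\<beta>^n * F (xd n)) - integral {real n * h..real n * h + h} \<phi>)"
      unfolding I by (simp add: algebra_simps)
    hence "\<bar>h * (\<Sum>k<Suc n. \<beta>^k * F (xd k)) - integral {0..real (Suc n) * h} \<phi>\<bar>
       \<le> h * (h * c * (\<Sum>k<n. exp (- \<mu> * h * real k))) + h * (h * c * exp (- \<mu> * h * real n))"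
      using Suc.IH intv[of n] by linarith
    also have "\<dots> = h * (h * c * (\<Sum>k<Suc n. exp (- \<mu> * h * real k)))" by (simp add: algebra_simps)
    finally show ?case .
  qed
  have partb: "\<bar>h * (\<Sum>k<n. \<beta>^k * F (xd k)) - integral {0..real n * h} \<phi>\<bar> \<le> h * (c * exp \<mu> / \<mu>)" for n
  proof -
    have "h * (c * (h * (\<Sum>k<n. exp (- \<mu> * h * real k)))) \<le> h * (c * (exp \<mu> / \<mu>))"
      using geom_bound[OF mpos h(1) h(2), of n] c0 h by (intro mult_left_mono) auto
    thus ?thesis using part[of n] by (simp add: algebra_simps)
  qed
  have lim1: "(\<lambda>n. h * (\<Sum>k<n. \<beta>^k * F (xd k))) \<longlonglongrightarrow> h * (\<Sum>k. \<beta>^k * F (xd k))"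
  proof -
    have sg: "summable (\<lambda>k. M * \<beta>^k)" using b0 by (intro summable_mult summable_geometric) auto
    have "summable (\<lambda>k. \<beta>^k * F (xd k))"
    proof (rule summable_comparison_test'[OF sg])
      fix k :: nat
      have "\<bar>F (xd k)\<bar> \<le> M" by (rule Fb[OF xdV])
      hence "\<beta>^k * \<bar>F (xd k)\<bar> \<le> \<beta>^k * M" using b0 by (intro mult_left_mono) auto
      thus "norm (\<beta>^k * F (xd k)) \<le> M * \<beta>^k" using b0 by (simp add: abs_mult mult.commute)
    qed
    hence "(\<lambda>n. \<Sum>k<n. \<beta>^k * F (xd k)) \<longlonglongrightarrow> (\<Sum>k. \<beta>^k * F (xd k))" by (rule summable_LIMSEQ)
    thus ?thesis by (intro tendsto_intros)
  qed
  have lim2: "(\<lambda>n. integral {0..real n * h} \<phi>) \<longlonglongrightarrow> integral {0..} \<phi>"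
  proof -
    define fn where "fn = (\<lambda>n t. if t \<in> {0..real n * h} then \<phi> t else 0)"
    have ifn: "integral {0..} (fn n) = integral {0..real n * h} \<phi>" for n
      unfolding fn_def integral_restrict_Int by (simp add: Int_absorb2 subset_iff)
    have "(\<lambda>n. integral {0..} (fn n)) \<longlonglongrightarrow> integral {0..} \<phi>"
    proof (rule dominated_convergence(2)[where h="\<lambda>t. M * exp (- \<rho> * t)"])
      fix n :: nat
      have "\<phi> integrable_on ({0..real n * h} \<inter> {0..})"
        using h by (auto simp: Int_absorb2 subset_iff intro!: integrable_continuous_interval phicont)
      thus "fn n integrable_on {0..}" unfolding fn_def by (subst integrable_restrict_Int)
    next
      show "(\<lambda>t. M * exp (- \<rho> * t)) integrable_on {0..}"
        using integrable_on_cmult_left[OF integrable_on_exp_minus_to_infinity[OF rpos, of 0], of M] by simp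
    next
      fix n :: nat and t :: real assume t: "t \<in> {0..}"
      have "\<bar>\<phi> t\<bar> \<le> M * exp (- \<rho> * t)"
      proof -
        have "\<bar>F (X t)\<bar> \<le> M" using Fb[OF XV[of t]] t by simp
        thus ?thesis unfolding \<phi>_def abs_mult by (simp add: mult_right_mono)
      qed
      thus "norm (fn n t) \<le> M * exp (- \<rho> * t)" unfolding fn_def using M0 by auto
    next
      fix t :: real assume t: "t \<in> {0..}"
      define N where "N = nat \<lceil>t / h\<rceil>"
      have "eventually (\<lambda>n. fn n t = \<phi> t) sequentially"
        unfolding eventually_sequentially
      proof (intro exI allI impI)
        fix n assume nN: "N \<le> n"
        have "t / h \<le> real N" unfolding N_def by linarith
        also have "\<dots> \<le> real n" using nN by simp
        finally have "t \<le> real n * h" using h by (simp add: divide_le_eq)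
        thus "fn n t = \<phi> t" using t unfolding fn_def by simp
      qed
      thus "(\<lambda>n. fn n t) \<longlonglongrightarrow> \<phi> t" by (rule tendsto_eventually)
    qed
    thus ?thesis unfolding ifn .
  qed
  have "(\<lambda>n. \<bar>h * (\<Sum>k<n. \<beta>^k * F (xd k)) - integral {0..real n * h} \<phi>\<bar>)
      \<longlonglongrightarrow> \<bar>h * (\<Sum>k. \<beta>^k * F (xd k)) - integral {0..} \<phi>\<bar>"
    by (intro tendsto_intros lim1 lim2)
  hence "\<bar>h * (\<Sum>k. \<beta>^k * F (xd k)) - integral {0..} \<phi>\<bar> \<le> h * (c * exp \<mu> / \<mu>)"
    by (rule LIMSEQ_le_const2) (use partb in auto)
  thus ?thesis unfolding \<phi>_def \<beta>_def c_def D_def w0_def by (simp add: algebra_simps)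
qed



lemma core:
  fixes X :: "real \<Rightarrow> 'v::real_normed_vector" and G :: "'v \<Rightarrow> 'v" and xd :: "real \<Rightarrow> nat \<Rightarrow> 'v"
  assumes Lnn: "0 \<le> L" and K: "0 \<le> K" and rho: "L + K < \<rho>"
    and lip: "\<And>a b. a \<in> V \<Longrightarrow> b \<in> V \<Longrightarrow> norm (G a - G b) \<le> L * norm (a - b)"
    and gr: "\<And>y. y \<in> V \<Longrightarrow> norm (G y) \<le> A + K * norm y"
    and XV: "\<And>s. 0 \<le> s \<Longrightarrow> X s \<in> V"
    and der: "\<And>T s. 0 \<le> T \<Longrightarrow> s \<in> {0..T} \<Longrightarrow> (X has_vector_derivative G (X s)) (at s within {0..T})"
    and X0: "X 0 = x"
    and xd0: "\<And>h. xd h 0 = x"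
    and rec: "\<And>h k. xd h (Suc k) = xd h k + h *\<^sub>R G (xd h k)"
    and xdV: "\<And>h k. 0 < h \<Longrightarrow> xd h k \<in> V"
  shows "\<exists>h0>0. \<exists>c1\<ge>0. \<exists>c2\<ge>0. \<forall>h F LF M. 0 < h \<and> h \<le> h0 \<and> 0 \<le> LF
      \<and> (\<forall>a\<in>V. \<forall>b\<in>V. \<bar>F a - F b\<bar> \<le> LF * norm (a - b)) \<and> (\<forall>a\<in>V. \<bar>F a\<bar> \<le> M) \<longrightarrow>
      \<bar>h * (\<Sum>k. (1 - \<rho>*h)^k * F (xd h k)) - integral {0..} (\<lambda>t. F (X t) * exp (- \<rho> * t))\<bar> \<le> (c1*LF + c2*M)*h"
proof -
  define \<delta> where "\<delta> = (\<rho> - L - K)/4"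
  define \<mu> where "\<mu> = min (\<rho>/2) (2*\<delta>)"
  define w0 where "w0 = A + K*norm x"
  define D where "D = 2*L*w0/\<delta>"
  define h0 where "h0 = min (min 1 (1/(2*L+1))) (min (\<delta>/(2*L^2+1)) (1/(2*\<rho>)))"
  define c1 where "c1 = (D + 2*w0 + 2*L*D) * exp \<mu> / \<mu>"
  define c2 where "c2 = 3*\<rho> * exp \<mu> / \<mu>"
  have dpos: "0 < \<delta>" using rho by (simp add: \<delta>_def)
  have rpos: "0 < \<rho>" using rho Lnn K by linarith
  have mpos: "0 < \<mu>" using dpos rpos by (simp add: \<mu>_def)
  have xV: "x \<in> V" using XV[of 0] X0 by simp
  have w0: "0 \<le> w0" using gr[OF xV] norm_ge_zero[of "G x"] unfolding w0_def by linarith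
  have D0: "0 \<le> D" unfolding D_def using w0 Lnn dpos by simp
  have "0 < 2*L^2+1" by (simp add: add_nonneg_pos)
  hence h0pos: "0 < h0" unfolding h0_def using dpos rpos Lnn by simp
  have c1: "0 \<le> c1" unfolding c1_def using D0 w0 Lnn mpos by simp
  have c2: "0 \<le> c2" unfolding c2_def using rpos mpos by simp
  have main: "\<forall>h F LF M. 0 < h \<and> h \<le> h0 \<and> 0 \<le> LF
      \<and> (\<forall>a\<in>V. \<forall>b\<in>V. \<bar>F a - F b\<bar> \<le> LF * norm (a - b)) \<and> (\<forall>a\<in>V. \<bar>F a\<bar> \<le> M) \<longrightarrow>
      \<bar>h * (\<Sum>k. (1 - \<rho>*h)^k * F (xd h k)) - integral {0..} (\<lambda>t. F (X t) * exp (- \<rho> * t))\<bar> \<le> (c1*LF + c2*M)*h"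
  proof (intro allI impI)
    fix h F LF M
    assume H: "0 < h \<and> h \<le> h0 \<and> 0 \<le> LF \<and> (\<forall>a\<in>V. \<forall>b\<in>V. \<bar>F a - F b\<bar> \<le> LF * norm (a - b)) \<and> (\<forall>a\<in>V. \<bar>F a\<bar> \<le> M)"
    hence h: "0 < h" "h \<le> h0" and LF: "0 \<le> LF" by auto
    have h1: "h \<le> 1" using h unfolding h0_def by linarith
    have "h \<le> 1/(2*L+1)" using h unfolding h0_def by linarith
    hence "h * (2*L+1) \<le> 1" using Lnn by (simp add: field_simps)
    hence hL: "h * L \<le> 1/2" using h by (simp add: algebra_simps)
    have "h \<le> \<delta>/(2*L^2+1)" using h unfolding h0_def by linarith
    hence "h * (2*L^2+1) \<le> \<delta>" by (simp add: field_simps add_pos_nonneg)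
    hence hL2: "2*h*L^2 \<le> \<delta>" using h by (simp add: algebra_simps)
    have "h \<le> 1/(2*\<rho>)" using h unfolding h0_def by linarith
    hence hr: "\<rho> * h \<le> 1/2" using rpos by (simp add: field_simps)
    have "\<bar>h * (\<Sum>k. (1 - \<rho>*h)^k * F (xd h k)) - integral {0..} (\<lambda>t. F (X t) * exp (- \<rho> * t))\<bar>
     \<le> h * ((3*\<rho>*M + LF*(2*L*(A + K*norm x)/\<delta> + 2*(A + K*norm x) + 2*L*(2*L*(A + K*norm x)/\<delta>))) * exp \<mu> / \<mu>)"
    proof (rule core_h[where V=V and G=G and LF=LF])
      show "\<And>a b. a \<in> V \<Longrightarrow> b \<in> V \<Longrightarrow> \<bar>F a - F b\<bar> \<le> LF * norm (a - b)" using H by blast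
      show "\<And>a. a \<in> V \<Longrightarrow> \<bar>F a\<bar> \<le> M" using H by blast
    qed (use Lnn K rho lip gr XV der X0 xd0 rec xdV h h1 hL hL2 hr LF in \<open>auto simp: \<delta>_def \<mu>_def\<close>)
    also have "\<dots> = (c1*LF + c2*M)*h"
      unfolding c1_def c2_def w0_def[symmetric] D_def[symmetric] using mpos by (simp add: field_simps)
    finally show "\<bar>h * (\<Sum>k. (1 - \<rho>*h)^k * F (xd h k)) - integral {0..} (\<lambda>t. F (X t) * exp (- \<rho> * t))\<bar> \<le> (c1*LF + c2*M)*h" .
  qed
  show ?thesis using h0pos c1 c2 main by blast
qed



lemma lip_profile:
  fixes c d s n Ls :: real
  assumes "n \<le> c * (d + s)" "0 \<le> d" "0 \<le> s" "s \<le> real N * Ls * d"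
  shows "n \<le> max 0 (c * (1 + real N * Ls)) * d"
proof (cases "0 \<le> c")
  case True
  have "c * (d + s) \<le> c * (d + real N * Ls * d)" using True assms by (intro mult_left_mono) auto
  also have "\<dots> = c * (1 + real N * Ls) * d" by (simp add: algebra_simps)
  also have "\<dots> \<le> max 0 (c * (1 + real N * Ls)) * d" using assms by (intro mult_right_mono) auto
  finally show ?thesis using assms by linarith
next
  case False
  hence "c * (d + s) \<le> 0" using assms by (simp add: mult_nonpos_nonneg)
  moreover have "0 \<le> max 0 (c * (1 + real N * Ls)) * d" using assms by simp
  ultimately show ?thesis using assms by linarith
qed

theorem proposition2:
  fixes V :: "'v::euclidean_space set"
    and U :: "nat \<Rightarrow> 'u::euclidean_space set"
    and N :: nat
    and g :: "'v \<Rightarrow> (nat \<Rightarrow> 'u) \<Rightarrow> 'v"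
    and f :: "nat \<Rightarrow> 'v \<Rightarrow> (nat \<Rightarrow> 'u) \<Rightarrow> real"
    and \<rho> :: real
    and phi :: "nat \<Rightarrow> 'v \<Rightarrow> 'u"
    and x :: 'v
    and Lg M Ls :: real
    and L :: "nat \<Rightarrow> real"
  assumes rho_pos: "\<rho> > 0"
    and x_in: "x \<in> V"
    \<comment> \<open>admissibility of the strategy tuple (phi_1,...,phi_N)\<close>
    and phi_maps: "\<And>j y. j < N \<Longrightarrow> y \<in> V \<Longrightarrow> phi j y \<in> U j"
    and phi_meas: "\<And>j. j < N \<Longrightarrow> phi j \<in> borel_measurable (restrict_space borel V)"
    and admissible: "\<And>x0. x0 \<in> V \<Longrightarrow> has_unique_solution V g phi x0"
    and disc_in: "\<And>h x0 n. h > 0 \<Longrightarrow> x0 \<in> V \<Longrightarrow> disc_traj g phi h x0 n \<in> V"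
    \<comment> \<open>H1\<close>
    and H1: "\<And>y1 y2 u v. y1 \<in> V \<Longrightarrow> y2 \<in> V \<Longrightarrow> (\<forall>j<N. u j \<in> U j \<and> v j \<in> U j) \<Longrightarrow>
              norm (g y1 u - g y2 v) \<le> Lg * (norm (y1 - y2) + (\<Sum>j<N. norm (u j - v j)))"
    \<comment> \<open>H2\<close>
    and H2: "\<And>i y1 y2 u v. i < N \<Longrightarrow> y1 \<in> V \<Longrightarrow> y2 \<in> V \<Longrightarrow> (\<forall>j<N. u j \<in> U j \<and> v j \<in> U j) \<Longrightarrow>
              \<bar>f i y1 u - f i y2 v\<bar> \<le> L i * (norm (y1 - y2) + (\<Sum>j<N. norm (u j - v j)))"
    \<comment> \<open>H3\<close>
    and H3: "\<And>i y u. i < N \<Longrightarrow> y \<in> V \<Longrightarrow> (\<forall>j<N. u j \<in> U j) \<Longrightarrow> \<bar>f i y u\<bar> \<le> M"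
    \<comment> \<open>Lipschitz strategies\<close>
    and Ls_pos: "Ls > 0"
    and phi_lip: "\<And>j y1 y2. j < N \<Longrightarrow> y1 \<in> V \<Longrightarrow> y2 \<in> V \<Longrightarrow>
              norm (phi j y1 - phi j y2) \<le> Ls * norm (y1 - y2)"
    \<comment> \<open>the alternative growth / discount conditions, with L = Lg (1 + N Ls)\<close>
    and cond: "(\<rho> > Lg * (1 + real N * Ls) \<and>
                 (\<exists>B. \<forall>y u. y \<in> V \<longrightarrow> (\<forall>j<N. u j \<in> U j) \<longrightarrow> norm (g y u) \<le> B))
             \<or> (\<exists>K\<ge>0. (\<forall>y u. y \<in> V \<longrightarrow> (\<forall>j<N. u j \<in> U j) \<longrightarrow> norm (g y u) \<le> K * (1 + norm y))
                      \<and> \<rho> > Lg * (1 + real N * Ls) + K)"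
  shows "\<exists>C>0. \<exists>h0>0. \<forall>h. 0 < h \<and> h \<le> h0 \<longrightarrow>
           (\<forall>i<N. \<bar>W_disc g f \<rho> h phi i x - W V g f \<rho> phi i x\<bar> \<le> C * h)"
proof -
  define G where "G = (\<lambda>y. g y (profile phi y))"
  define X where "X = traj V g phi x"
  define xd where "xd = (\<lambda>h. disc_traj g phi h x)"
  define Lp where "Lp = max 0 (Lg * (1 + real N * Ls))"
  have Lp0: "0 \<le> Lp" by (simp add: Lp_def)
  have prof: "\<forall>j<N. profile phi y j \<in> U j" if "y \<in> V" for y
    using phi_maps that by (simp add: profile_def)
  have prof2: "\<forall>j<N. profile phi a j \<in> U j \<and> profile phi b j \<in> U j" if "a \<in> V" "b \<in> V" for a b
    using prof that by blast
  have sumb: "(\<Sum>j<N. norm (profile phi a j - profile phi b j)) \<le> real N * Ls * norm (a - b)"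
    if "a \<in> V" "b \<in> V" for a b
  proof -
    have "(\<Sum>j<N. norm (profile phi a j - profile phi b j)) \<le> of_nat (card {..<N}) * (Ls * norm (a - b))"
      by (rule sum_bounded_above) (use phi_lip that in \<open>auto simp: profile_def\<close>)
    thus ?thesis by simp
  qed
  have Glip: "norm (G a - G b) \<le> Lp * norm (a - b)" if "a \<in> V" "b \<in> V" for a b
    unfolding Lp_def G_def
    by (rule lip_profile[OF H1[OF that prof2[OF that]]]) (use sumb[OF that] in \<open>auto intro: sum_nonneg\<close>)
  obtain A K where K0: "0 \<le> K" and rhoK: "Lp + K < \<rho>" and gr: "\<And>y. y \<in> V \<Longrightarrow> norm (G y) \<le> A + K * norm y"
  proof (cases "Lg * (1 + real N * Ls) \<le> 0")
    case True
    hence "Lp = 0" by (simp add: Lp_def)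
    hence "G y = G x" if "y \<in> V" for y using Glip[OF that x_in] by simp
    thus ?thesis using that[of 0 "norm (G x)"] rho_pos \<open>Lp = 0\<close> by auto
  next
    case False
    hence Lpe: "Lp = Lg * (1 + real N * Ls)" by (simp add: Lp_def)
    from cond show ?thesis
    proof
      assume c1: "\<rho> > Lg * (1 + real N * Ls) \<and> (\<exists>B. \<forall>y u. y \<in> V \<longrightarrow> (\<forall>j<N. u j \<in> U j) \<longrightarrow> norm (g y u) \<le> B)"
      then obtain B where B: "\<forall>y u. y \<in> V \<longrightarrow> (\<forall>j<N. u j \<in> U j) \<longrightarrow> norm (g y u) \<le> B" by blast
      show ?thesis
      proof (rule that[of 0 B])
        show "\<And>y. y \<in> V \<Longrightarrow> norm (G y) \<le> B + 0 * norm y" using B prof unfolding G_def by simp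
      qed (use c1 Lpe in auto)
    next
      assume "\<exists>K\<ge>0. (\<forall>y u. y \<in> V \<longrightarrow> (\<forall>j<N. u j \<in> U j) \<longrightarrow> norm (g y u) \<le> K * (1 + norm y))
                      \<and> \<rho> > Lg * (1 + real N * Ls) + K"
      then obtain K where K: "K \<ge> 0" "\<forall>y u. y \<in> V \<longrightarrow> (\<forall>j<N. u j \<in> U j) \<longrightarrow> norm (g y u) \<le> K * (1 + norm y)"
        "\<rho> > Lg * (1 + real N * Ls) + K" by blast
      show ?thesis
      proof (rule that[of K K])
        show "\<And>y. y \<in> V \<Longrightarrow> norm (G y) \<le> K + K * norm y" using K(2) prof unfolding G_def
          by (simp add: algebra_simps)
      qed (use K Lpe in auto)
    qed
  qed
  have sol: "is_solution V g phi x X"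
  proof -
    from admissible[OF x_in] have "\<exists>y. is_solution V g phi x y" unfolding has_unique_solution_def by blast
    thus ?thesis unfolding X_def traj_def by (rule someI_ex)
  qed
  have XV: "X s \<in> V" and Xeq: "X s = x + integral {0..s} (\<lambda>r. G (X r))"
    and Xint: "(\<lambda>r. G (X r)) integrable_on {0..s}" if "0 \<le> s" for s
    using sol that unfolding is_solution_def G_def absolutely_integrable_on_def by auto
  have X0: "X 0 = x" using Xeq[of 0] by simp
  have Gcont: "continuous_on V G"
    by (rule lipschitz_on_continuous_on[of Lp]) (auto intro!: lipschitz_onI simp: dist_norm Glip Lp0)
  have der: "(X has_vector_derivative G (X s)) (at s within {0..T})" if T: "0 \<le> T" and s: "s \<in> {0..T}" for T s
  proof -
    have Xc: "continuous_on {0..T} X"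
    proof (rule continuous_on_eq[where f="\<lambda>t. x + integral {0..t} (\<lambda>r. G (X r))"])
      show "continuous_on {0..T} (\<lambda>t. x + integral {0..t} (\<lambda>r. G (X r)))"
        by (intro continuous_intros indefinite_integral_continuous_1 Xint T)
      show "\<And>t. t \<in> {0..T} \<Longrightarrow> x + integral {0..t} (\<lambda>r. G (X r)) = X t" using Xeq by auto
    qed
    have GXc: "continuous_on {0..T} (\<lambda>r. G (X r))"
      by (rule continuous_on_compose2[OF Gcont Xc]) (use XV in auto)
    have "((\<lambda>t. x + integral {0..t} (\<lambda>r. G (X r))) has_vector_derivative (0 + G (X s))) (at s within {0..T})"
      by (intro derivative_intros integral_has_vector_derivative GXc s)
    hence d: "((\<lambda>t. x + integral {0..t} (\<lambda>r. G (X r))) has_vector_derivative G (X s)) (at s within {0..T})" by simp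
    show ?thesis by (rule has_vector_derivative_transform[OF s _ d]) (use Xeq in auto)
  qed
  have xd0: "xd h 0 = x" for h by (simp add: xd_def)
  have rec: "xd h (Suc k) = xd h k + h *\<^sub>R G (xd h k)" for h k by (simp add: xd_def G_def)
  have xdV: "xd h k \<in> V" if "0 < h" for h k using disc_in[OF that x_in] by (simp add: xd_def)
  obtain h0 c1 c2 where h0: "0 < h0" and c1: "0 \<le> c1" and c2: "0 \<le> c2"
    and main: "\<And>h F LF M. 0 < h \<and> h \<le> h0 \<and> 0 \<le> LF
      \<and> (\<forall>a\<in>V. \<forall>b\<in>V. \<bar>F a - F b\<bar> \<le> LF * norm (a - b)) \<and> (\<forall>a\<in>V. \<bar>F a\<bar> \<le> M) \<Longrightarrow>
      \<bar>h * (\<Sum>k. (1 - \<rho>*h)^k * F (xd h k)) - integral {0..} (\<lambda>t. F (X t) * exp (- \<rho> * t))\<bar> \<le> (c1*LF + c2*M)*h"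
    using core[where X=X and G=G and xd=xd and V=V and A=A and x=x, OF Lp0 K0 rhoK Glip gr XV der X0 xd0 rec xdV]
    by blast
  define LF where "LF = (\<lambda>i. max 0 (L i * (1 + real N * Ls)))"
  define C where "C = c1 * (\<Sum>i<N. LF i) + c2 * \<bar>M\<bar> + 1"
  have LF0: "0 \<le> LF i" for i by (simp add: LF_def)
  have Cpos: "0 < C" unfolding C_def using c1 c2 LF0 by (simp add: sum_nonneg add_nonneg_pos)
  have fin: "\<forall>h. 0 < h \<and> h \<le> h0 \<longrightarrow>
           (\<forall>i<N. \<bar>W_disc g f \<rho> h phi i x - W V g f \<rho> phi i x\<bar> \<le> C * h)"
  proof (intro allI impI)
    fix h i assume h: "0 < h \<and> h \<le> h0" and i: "i < N"
    define F where "F = (\<lambda>y. f i y (profile phi y))"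
    have Flip: "\<forall>a\<in>V. \<forall>b\<in>V. \<bar>F a - F b\<bar> \<le> LF i * norm (a - b)"
    proof (intro ballI)
      fix a b assume ab: "a \<in> V" "b \<in> V"
      show "\<bar>F a - F b\<bar> \<le> LF i * norm (a - b)"
        unfolding LF_def F_def
        by (rule lip_profile[OF H2[OF i ab prof2[OF ab]]]) (use sumb[OF ab] in \<open>auto intro: sum_nonneg\<close>)
    qed
    have Fb: "\<forall>a\<in>V. \<bar>F a\<bar> \<le> \<bar>M\<bar>" using H3[OF i] prof unfolding F_def by (meson abs_ge_self order_trans)
    have "\<bar>h * (\<Sum>k. (1 - \<rho>*h)^k * F (xd h k)) - integral {0..} (\<lambda>t. F (X t) * exp (- \<rho> * t))\<bar> \<le> (c1 * LF i + c2 * \<bar>M\<bar>) * h"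
      using main[of h "LF i" F "\<bar>M\<bar>"] h LF0 Flip Fb by blast
    also have "\<dots> \<le> C * h"
    proof -
      have "LF i \<le> (\<Sum>i<N. LF i)" using i LF0 by (intro member_le_sum) auto
      hence "c1 * LF i \<le> c1 * (\<Sum>i<N. LF i)" using c1 by (intro mult_left_mono)
      hence "c1 * LF i + c2 * \<bar>M\<bar> \<le> C" unfolding C_def by linarith
      thus ?thesis using h by (intro mult_right_mono) auto
    qed
    finally show "\<bar>W_disc g f \<rho> h phi i x - W V g f \<rho> phi i x\<bar> \<le> C * h"
      unfolding W_disc_def W_def F_def xd_def X_def .
  qed
  show ?thesis using Cpos h0 fin by blast
qed


thm_deps proposition2

end
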